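(* For every $n\ge 5$, $v(C_n)=v(P_{n-3})+1$, where $C_n$ is the cycle on $n$ vertices and $P_{n-3}$ is the path on $n-3$ vertices.
   Context: Let $K$ be a field and $S$ a standard graded polynomial ring over $K$. For a proper graded ideal $I\subset S$, the $v$-number is $v(I)=\min\{k\ge 0 : \exists f\in S_k,\ \mathcal P\in\operatorname{Ass}(S/I) \text{ with } (I:f)=\mathcal P\}$. For a finite simple graph $G$ whose vertices are the variables of $S$, $I(G)$ is the edge ideal generated by $x_ix_j$ over edges $\{x_i,x_j\}$, and $v(G):=v(I(G))$. The path $P_m$ has vertices $x_1,\dots,x_m$ and edges $\{x_i,x_{i+1}\}$; the cycle $C_n$ has vertices $x_1,\dots,x_n$ and edges $\{x_i,x_{i+1}\}$ ($1\le i\le n-1$) and $\{x_n,x_1\}$. *)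

theory Defs
  imports Main "HOL-Library.Poly_Mapping"
begin

text \<open>Polynomials over a field 'a in variables x_i (i :: nat), represented as finitely
supported maps from monomials (exponent vectors) to coefficients.\<close>

type_synonym 'a mpoly = "(nat \<Rightarrow>\<^sub>0 nat) \<Rightarrow>\<^sub>0 'a"

definition Var :: "nat \<Rightarrow> 'a::field mpoly" where
  "Var i = Poly_Mapping.single (Poly_Mapping.single i 1) 1"

definition polyring :: "nat \<Rightarrow> 'a::field mpoly set" where
  "polyring n = {p :: 'a mpoly. \<forall>m \<in> Poly_Mapping.keys p. Poly_Mapping.keys m \<subseteq> {1..n}}"

definition mon_deg :: "(nat \<Rightarrow>\<^sub>0 nat) \<Rightarrow> nat" where
  "mon_deg m = (\<Sum>i\<in>Poly_Mapping.keys m. Poly_Mapping.lookup m i)"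

definition homog_comp :: "nat \<Rightarrow> nat \<Rightarrow> 'a::field mpoly set" where
  "homog_comp n k = {p \<in> polyring n. \<forall>m \<in> Poly_Mapping.keys p. mon_deg m = k}"

definition is_ideal :: "nat \<Rightarrow> 'a::field mpoly set \<Rightarrow> bool" where
  "is_ideal n J \<longleftrightarrow> J \<subseteq> polyring n \<and> 0 \<in> J \<and>
     (\<forall>a\<in>J. \<forall>b\<in>J. a + b \<in> J) \<and> (\<forall>r\<in>polyring n. \<forall>a\<in>J. r * a \<in> J)"

definition ideal_gen :: "nat \<Rightarrow> 'a::field mpoly set \<Rightarrow> 'a mpoly set" where
  "ideal_gen n G = \<Inter>{J. is_ideal n J \<and> G \<subseteq> J}"

definition prime_ideal :: "nat \<Rightarrow> 'a::field mpoly set \<Rightarrow> bool" where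
  "prime_ideal n P \<longleftrightarrow> is_ideal n P \<and> P \<noteq> polyring n \<and>
     (\<forall>a\<in>polyring n. \<forall>b\<in>polyring n. a * b \<in> P \<longrightarrow> a \<in> P \<or> b \<in> P)"

definition colon :: "nat \<Rightarrow> 'a::field mpoly set \<Rightarrow> 'a mpoly \<Rightarrow> 'a mpoly set" where
  "colon n I f = {g \<in> polyring n. g * f \<in> I}"

definition Ass :: "nat \<Rightarrow> 'a::field mpoly set \<Rightarrow> 'a mpoly set set" where
  "Ass n I = {P. prime_ideal n P \<and> (\<exists>f\<in>polyring n. colon n I f = P)}"

definition vnumber :: "nat \<Rightarrow> 'a::field mpoly set \<Rightarrow> nat" where
  "vnumber n I = (LEAST k. \<exists>f \<in> homog_comp n k. \<exists>P \<in> Ass n I. colon n I f = P)"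

definition edge_ideal :: "nat \<Rightarrow> (nat \<times> nat) set \<Rightarrow> 'a::field mpoly set" where
  "edge_ideal n E = ideal_gen n {Var i * Var j | i j. (i, j) \<in> E}"

definition path_edges :: "nat \<Rightarrow> (nat \<times> nat) set" where
  "path_edges m = {(i, i + 1) | i. 1 \<le> i \<and> i + 1 \<le> m}"

definition cycle_edges :: "nat \<Rightarrow> (nat \<times> nat) set" where
  "cycle_edges n = path_edges n \<union> {(n, 1)}"

end

theory Submission
  imports Defs
begin

lemma keys_add_nat: "Poly_Mapping.keys ((m1::nat \<Rightarrow>\<^sub>0 nat) + m2) = Poly_Mapping.keys m1 \<union> Poly_Mapping.keys m2"
  by (auto simp: in_keys_iff lookup_add)

lemma lookup_single_mult:
  "Poly_Mapping.lookup (Poly_Mapping.single s (c::'a::field) * (f::'a mpoly)) (s + u) = c * Poly_Mapping.lookup f u"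
  by (simp add: lookup_mult lookup_single when_mult mult_when Sum_any_right_distrib)

lemma sum_monomials: "(p::'a::field mpoly) = (\<Sum>m\<in>Poly_Mapping.keys p. Poly_Mapping.single m (Poly_Mapping.lookup p m))"
  by (rule poly_mapping_eqI) (auto simp: lookup_sum lookup_single when_def in_keys_iff)



lemma keys_single_mult:
  "Poly_Mapping.keys (Poly_Mapping.single s (1::'a::field) * (f::'a mpoly)) = (+) s ` Poly_Mapping.keys f"
proof
  show "Poly_Mapping.keys (Poly_Mapping.single s 1 * f) \<subseteq> (+) s ` Poly_Mapping.keys f"
    using keys_mult[of "Poly_Mapping.single s (1::'a)" f] by auto
  show "(+) s ` Poly_Mapping.keys f \<subseteq> Poly_Mapping.keys (Poly_Mapping.single s 1 * f)"
    by (auto simp: in_keys_iff lookup_single_mult)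
qed

lemma polyring_mult: "p \<in> polyring n \<Longrightarrow> q \<in> polyring n \<Longrightarrow> (p * q :: 'a::field mpoly) \<in> polyring n"
  unfolding polyring_def using keys_mult[of p q] by (force simp: keys_add_nat)

lemma polyring_add: "p \<in> polyring n \<Longrightarrow> q \<in> polyring n \<Longrightarrow> (p + q :: 'a::field mpoly) \<in> polyring n"
  unfolding polyring_def using keys_add[of p q] by blast

lemma polyring_diff: "p \<in> polyring n \<Longrightarrow> q \<in> polyring n \<Longrightarrow> (p - q :: 'a::field mpoly) \<in> polyring n"
  unfolding polyring_def using keys_diff[of p q] by blast

lemma polyring_single: "Poly_Mapping.keys m \<subseteq> {1..n} \<Longrightarrow> (Poly_Mapping.single m c :: 'a::field mpoly) \<in> polyring n"
  unfolding polyring_def by auto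

lemma polyring_one: "(1 :: 'a::field mpoly) \<in> polyring n"
  unfolding polyring_def by (simp add: keys_one)

lemma polyring_zero: "(0 :: 'a::field mpoly) \<in> polyring n"
  unfolding polyring_def by simp

definition KQ :: "((nat \<Rightarrow>\<^sub>0 nat) \<Rightarrow> bool) \<Rightarrow> 'a::field mpoly \<Rightarrow> bool" where
  "KQ Q p \<longleftrightarrow> (\<forall>m\<in>Poly_Mapping.keys p. Q m)"

definition upc :: "((nat \<Rightarrow>\<^sub>0 nat) \<Rightarrow> bool) \<Rightarrow> bool" where
  "upc Q \<longleftrightarrow> (\<forall>m m'. Q m \<longrightarrow> Q (m + m'))"

definition MI :: "nat \<Rightarrow> ((nat \<Rightarrow>\<^sub>0 nat) \<Rightarrow> bool) \<Rightarrow> 'a::field mpoly set" where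
  "MI n Q = {p \<in> polyring n. KQ Q p}"

lemma KQ_add: "KQ Q p \<Longrightarrow> KQ Q q \<Longrightarrow> KQ Q (p + q)"
  unfolding KQ_def using keys_add[of p q] by blast

lemma KQ_diff: "KQ Q p \<Longrightarrow> KQ Q q \<Longrightarrow> KQ Q (p - q)"
  unfolding KQ_def using keys_diff[of p q] by blast

lemma KQ_mult: "upc Q \<Longrightarrow> KQ Q q \<Longrightarrow> KQ Q (p * q)"
proof -
  assume u: "upc Q" and q: "KQ Q q"
  show ?thesis unfolding KQ_def
  proof
    fix m assume "m \<in> Poly_Mapping.keys (p * q)"
    then obtain a b where "m = a + b" "b \<in> Poly_Mapping.keys q" using keys_mult[of p q] by blast
    thus "Q m" using u q unfolding upc_def KQ_def by (metis add.commute)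
  qed
qed

lemma KQ_zero: "KQ Q 0" by (simp add: KQ_def)

lemma MI_ideal: "upc Q \<Longrightarrow> is_ideal n (MI n Q)"
  unfolding is_ideal_def MI_def
  by (auto simp: polyring_zero KQ_zero polyring_add KQ_add polyring_mult KQ_mult)

definition Qe :: "(nat \<times> nat) set \<Rightarrow> (nat \<Rightarrow>\<^sub>0 nat) \<Rightarrow> bool" where
  "Qe E m \<longleftrightarrow> (\<exists>(i,j)\<in>E. i \<in> Poly_Mapping.keys m \<and> j \<in> Poly_Mapping.keys m)"

lemma upc_Qe: "upc (Qe E)"
  unfolding upc_def Qe_def by (auto simp: keys_add_nat)

lemma Var_mult: "Var i * Var j = (Poly_Mapping.single (Poly_Mapping.single i 1 + Poly_Mapping.single j 1) 1 :: 'a::field mpoly)"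
  by (simp add: Var_def mult_single)

lemma monomial_in_ideal:
  assumes J: "is_ideal n J" and G: "{Var i * Var j | i j. (i, j) \<in> E} \<subseteq> (J :: 'a::field mpoly set)"
    and Qm: "Qe E m" and Em: "\<forall>(i,j)\<in>E. i \<noteq> j" and km: "Poly_Mapping.keys m \<subseteq> {1..n}"
  shows "Poly_Mapping.single m c \<in> J"
proof -
  obtain i j where ij: "(i,j) \<in> E" "i \<in> Poly_Mapping.keys m" "j \<in> Poly_Mapping.keys m"
    using Qm unfolding Qe_def by auto
  have "i \<noteq> j" using Em ij by auto
  define s where "s = Poly_Mapping.single i 1 + Poly_Mapping.single j (1::nat)"
  define m' where "m' = m - s"
  have msum: "m = m' + s"
    unfolding m'_def s_def
    using ij \<open>i \<noteq> j\<close>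
    by (intro poly_mapping_eqI) (auto simp: lookup_add lookup_minus lookup_single when_def in_keys_iff)
  have "Poly_Mapping.keys m' \<subseteq> Poly_Mapping.keys m"
    using msum keys_add_nat by auto
  hence "Poly_Mapping.single m' c \<in> polyring n" using km polyring_single by blast
  moreover have "Var i * Var j \<in> J" using G ij by blast
  ultimately have "Poly_Mapping.single m' c * (Var i * Var j) \<in> J"
    using J unfolding is_ideal_def by blast
  thus ?thesis by (simp add: Var_mult mult_single msum s_def)
qed

lemma ideal_sum:
  assumes J: "is_ideal n J"
  shows "finite S \<Longrightarrow> (\<And>x. x \<in> S \<Longrightarrow> g x \<in> J) \<Longrightarrow> sum g S \<in> J"
proof (induction S rule: finite_induct)
  case empty then show ?case using J by (simp add: is_ideal_def)
next
  case (insert x F) then show ?case using J by (simp add: is_ideal_def)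
qed

lemma edge_ideal_MI:
  assumes Em: "\<forall>(i,j)\<in>E. i \<noteq> j \<and> i \<in> {1..n} \<and> j \<in> {1..n}"
  shows "(edge_ideal n E :: 'a::field mpoly set) = MI n (Qe E)"
proof
  have gens: "{Var i * Var j | i j. (i, j) \<in> E} \<subseteq> (MI n (Qe E) :: 'a mpoly set)"
  proof
    fix x :: "'a mpoly" assume "x \<in> {Var i * Var j | i j. (i, j) \<in> E}"
    then obtain i j where ij: "(i,j) \<in> E" "x = Var i * Var j" by blast
    have "x = Poly_Mapping.single (Poly_Mapping.single i 1 + Poly_Mapping.single j 1) 1"
      by (simp add: ij Var_mult)
    moreover have "Poly_Mapping.keys (Poly_Mapping.single i 1 + Poly_Mapping.single j (1::nat)) = {i, j}"
      by (auto simp: keys_add_nat)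
    ultimately show "x \<in> MI n (Qe E)"
      unfolding MI_def KQ_def Qe_def polyring_def using ij Em by auto
  qed
  show "edge_ideal n E \<subseteq> (MI n (Qe E) :: 'a mpoly set)"
    unfolding edge_ideal_def ideal_gen_def using gens MI_ideal[OF upc_Qe] by blast
  show "MI n (Qe E) \<subseteq> (edge_ideal n E :: 'a mpoly set)"
  proof
    fix p :: "'a mpoly" assume p: "p \<in> MI n (Qe E)"
    show "p \<in> edge_ideal n E"
      unfolding edge_ideal_def ideal_gen_def
    proof (intro InterI, clarify)
      fix J :: "'a mpoly set" assume J: "is_ideal n J" "{Var i * Var j | i j. (i, j) \<in> E} \<subseteq> J"
      have "(\<Sum>m\<in>Poly_Mapping.keys p. Poly_Mapping.single m (Poly_Mapping.lookup p m)) \<in> J"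
        apply (rule ideal_sum[OF J(1)])
         apply simp
        apply (rule monomial_in_ideal[OF J])
        using p Em unfolding MI_def KQ_def polyring_def by auto
      thus "p \<in> J" using sum_monomials[of p] by simp
    qed
  qed
qed



definition adj :: "(nat \<times> nat) set \<Rightarrow> nat \<Rightarrow> nat \<Rightarrow> bool" where
  "adj E c b \<longleftrightarrow> (c, b) \<in> E \<or> (b, c) \<in> E"

lemma card_keys_le_deg: "card (Poly_Mapping.keys m) \<le> mon_deg m"
proof -
  have "card (Poly_Mapping.keys m) = (\<Sum>i\<in>Poly_Mapping.keys m. (1::nat))" by simp
  also have "\<dots> \<le> (\<Sum>i\<in>Poly_Mapping.keys m. Poly_Mapping.lookup m i)"
    by (rule sum_mono) (auto simp: in_keys_iff)
  finally show ?thesis by (simp add: mon_deg_def)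
qed

lemma Var_keys: "Var c = (Poly_Mapping.single (Poly_Mapping.single c 1) 1 :: 'a::field mpoly)"
  by (simp add: Var_def)

lemma Var_polyring: "c \<in> {1..n} \<Longrightarrow> (Var c :: 'a::field mpoly) \<in> polyring n"
  unfolding Var_def by (rule polyring_single) auto

lemma var_in_colon_adj:
  assumes Em: "\<forall>(i,j)\<in>E. i \<noteq> j"
    and cm: "(Var c * f :: 'a::field mpoly) \<in> MI n (Qe E)"
    and u: "u \<in> Poly_Mapping.keys f" and nu: "\<not> Qe E u"
  shows "\<exists>b\<in>Poly_Mapping.keys u. adj E c b"
proof -
  have "Poly_Mapping.single c 1 + u \<in> Poly_Mapping.keys (Var c * f)"
    using u by (simp add: Var_keys keys_single_mult)
  hence "Qe E (Poly_Mapping.single c 1 + u)" using cm unfolding MI_def KQ_def by blast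
  then obtain a b where ab: "(a,b) \<in> E" "a \<in> insert c (Poly_Mapping.keys u)" "b \<in> insert c (Poly_Mapping.keys u)"
    unfolding Qe_def by (auto simp: keys_add_nat)
  have "a \<noteq> b" using Em ab by auto
  have "\<not> (a \<in> Poly_Mapping.keys u \<and> b \<in> Poly_Mapping.keys u)" using nu ab unfolding Qe_def by blast
  thus ?thesis using ab \<open>a \<noteq> b\<close> unfolding adj_def by auto
qed

lemma lower_generic:
  assumes Em: "\<forall>(i,j)\<in>E. i \<noteq> j \<and> i \<in> {1..n} \<and> j \<in> {1..n}"
    and f: "f \<in> homog_comp n k" and P: "P \<in> Ass n (MI n (Qe E))"
    and c: "colon n (MI n (Qe E)) f = (P :: 'a::field mpoly set)"
  shows "\<exists>u::nat \<Rightarrow>\<^sub>0 nat. Poly_Mapping.keys u \<subseteq> {1..n} \<and> card (Poly_Mapping.keys u) \<le> k \<and>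
           (\<forall>(i,j)\<in>E. \<exists>b\<in>Poly_Mapping.keys u. adj E i b \<or> adj E j b)"
proof -
  have fp: "f \<in> polyring n" and fk: "\<forall>m\<in>Poly_Mapping.keys f. mon_deg m = k"
    using f unfolding homog_comp_def by auto
  have pr: "prime_ideal n P" using P unfolding Ass_def by auto
  have idl: "is_ideal n (MI n (Qe E) :: 'a mpoly set)" by (rule MI_ideal[OF upc_Qe])
  have "\<not> KQ (Qe E) f"
  proof
    assume "KQ (Qe E) f"
    hence fM: "f \<in> MI n (Qe E)" using fp unfolding MI_def by auto
    have "colon n (MI n (Qe E)) f = polyring n"
      unfolding colon_def using idl fM unfolding is_ideal_def by auto
    thus False using pr c unfolding prime_ideal_def by auto
  qed
  then obtain u where u: "u \<in> Poly_Mapping.keys f" "\<not> Qe E u" unfolding KQ_def by auto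
  have uk: "Poly_Mapping.keys u \<subseteq> {1..n}" using fp u unfolding polyring_def by auto
  have ucard: "card (Poly_Mapping.keys u) \<le> k" using card_keys_le_deg[of u] fk u by auto
  have "\<exists>b\<in>Poly_Mapping.keys u. adj E i b \<or> adj E j b" if ij: "(i,j) \<in> E" for i j
  proof -
    have ip: "Var i \<in> (polyring n :: 'a mpoly set)" "Var j \<in> (polyring n :: 'a mpoly set)"
      using Em ij by (auto intro!: Var_polyring)
    have ijM: "Var i * Var j \<in> (MI n (Qe E) :: 'a mpoly set)"
    proof -
      have "Poly_Mapping.keys (Poly_Mapping.single i 1 + Poly_Mapping.single j (1::nat)) = {i, j}"
        by (auto simp: keys_add_nat)
      thus ?thesis
        unfolding MI_def KQ_def Qe_def using ij Em
        by (auto simp: Var_mult polyring_def)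
    qed
    have "f * (Var i * Var j) \<in> MI n (Qe E)" using idl fp ijM unfolding is_ideal_def by blast
    hence "Var i * Var j \<in> P" using c ip polyring_mult unfolding colon_def by (auto simp: mult.commute)
    hence "Var i \<in> P \<or> Var j \<in> P" using pr ip unfolding prime_ideal_def by blast
    moreover have "\<exists>b\<in>Poly_Mapping.keys u. adj E x b" if "Var x \<in> P" for x
    proof -
      have "Var x * f \<in> MI n (Qe E)" using that c unfolding colon_def by auto
      thus ?thesis using var_in_colon_adj[of E x f n u] Em u by auto
    qed
    ultimately show ?thesis by blast
  qed
  hence "\<forall>(i,j)\<in>E. \<exists>b\<in>Poly_Mapping.keys u. adj E i b \<or> adj E j b" by blast
  thus ?thesis using uk ucard by blast
qed



definition restr :: "((nat \<Rightarrow>\<^sub>0 nat) \<Rightarrow> bool) \<Rightarrow> 'a::field mpoly \<Rightarrow> 'a mpoly" where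
  "restr Q p = Poly_Mapping.mapp (\<lambda>k v. if Q k then 0 else v) p"

lemma lookup_restr: "Poly_Mapping.lookup (restr Q p) k = (if Q k then 0 else Poly_Mapping.lookup p k)"
  by (auto simp: restr_def lookup_mapp when_def in_keys_iff)

lemma KQ_sub_restr: "KQ Q (p - restr Q p)"
  unfolding KQ_def by (auto simp: in_keys_iff lookup_minus lookup_restr split: if_splits)

lemma restr_keys: "m \<in> Poly_Mapping.keys (restr Q p) \<Longrightarrow> \<not> Q m"
  by (auto simp: in_keys_iff lookup_restr split: if_splits)

lemma restr_nonzero: "\<not> KQ Q p \<Longrightarrow> restr Q p \<noteq> 0"
proof
  assume "\<not> KQ Q p" "restr Q p = 0"
  then obtain m where "m \<in> Poly_Mapping.keys p" "\<not> Q m" unfolding KQ_def by auto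
  hence "Poly_Mapping.lookup (restr Q p) m \<noteq> 0" by (simp add: lookup_restr in_keys_iff)
  thus False using \<open>restr Q p = 0\<close> by simp
qed

definition Qc :: "nat set \<Rightarrow> (nat \<Rightarrow>\<^sub>0 nat) \<Rightarrow> bool" where
  "Qc C m \<longleftrightarrow> (\<exists>c\<in>C. c \<in> Poly_Mapping.keys m)"

lemma upc_Qc: "upc (Qc C)"
  unfolding upc_def Qc_def by (auto simp: keys_add_nat)

lemma MI_prime: "prime_ideal n (MI n (Qc C) :: 'a::field mpoly set)"
proof -
  have idl: "is_ideal n (MI n (Qc C) :: 'a mpoly set)" by (rule MI_ideal[OF upc_Qc])
  have ne: "MI n (Qc C) \<noteq> (polyring n :: 'a mpoly set)"
  proof
    assume "MI n (Qc C) = (polyring n :: 'a mpoly set)"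
    hence "(1::'a mpoly) \<in> MI n (Qc C)" using polyring_one by blast
    thus False unfolding MI_def KQ_def Qc_def by (simp add: keys_one)
  qed
  have pr: "a \<in> MI n (Qc C) \<or> b \<in> MI n (Qc C)"
    if ab: "a \<in> polyring n" "b \<in> polyring n" "(a * b :: 'a mpoly) \<in> MI n (Qc C)" for a b
  proof (rule ccontr)
    assume "\<not> (a \<in> MI n (Qc C) \<or> b \<in> MI n (Qc C))"
    hence na: "\<not> KQ (Qc C) a" and nb: "\<not> KQ (Qc C) b" using ab unfolding MI_def by auto
    define a2 where "a2 = restr (Qc C) a"
    define b2 where "b2 = restr (Qc C) b"
    have a20: "a2 \<noteq> 0" using restr_nonzero[OF na] a2_def by simp
    have b20: "b2 \<noteq> 0" using restr_nonzero[OF nb] b2_def by simp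
    have eq: "a2 * b2 = a * b - b * (a - a2) - a2 * (b - b2)" by (simp add: algebra_simps)
    have k1: "KQ (Qc C) (a * b)" using ab unfolding MI_def by auto
    have k2: "KQ (Qc C) (b * (a - a2))" using KQ_mult[OF upc_Qc KQ_sub_restr] a2_def by blast
    have k3: "KQ (Qc C) (a2 * (b - b2))" using KQ_mult[OF upc_Qc KQ_sub_restr] b2_def by blast
    have kq: "KQ (Qc C) (a2 * b2)" unfolding eq using k1 k2 k3 KQ_diff by blast
    have "\<not> Qc C m" if m: "m \<in> Poly_Mapping.keys (a2 * b2)" for m
    proof -
      obtain x y where "m = x + y" "x \<in> Poly_Mapping.keys a2" "y \<in> Poly_Mapping.keys b2"
        using m keys_mult[of a2 b2] by blast
      thus ?thesis using restr_keys[of x "Qc C" a] restr_keys[of y "Qc C" b] a2_def b2_def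
        unfolding Qc_def by (auto simp: keys_add_nat)
    qed
    hence "Poly_Mapping.keys (a2 * b2) = {}" using kq unfolding KQ_def by blast
    hence "a2 * b2 = 0" by simp
    thus False using a20 b20 by simp
  qed
  show ?thesis unfolding prime_ideal_def using idl ne pr by blast
qed



lemma lookup_sum_singles: "finite A \<Longrightarrow> Poly_Mapping.lookup (\<Sum>a\<in>A. Poly_Mapping.single a (1::nat)) i = (if i \<in> A then 1 else 0)"
  by (simp add: lookup_sum lookup_single when_def)

lemma keys_sum_singles: "finite A \<Longrightarrow> Poly_Mapping.keys (\<Sum>a\<in>A. Poly_Mapping.single a (1::nat)) = A"
proof (rule set_eqI)
  fix x assume "finite A"
  show "x \<in> Poly_Mapping.keys (\<Sum>a\<in>A. Poly_Mapping.single a (1::nat)) \<longleftrightarrow> x \<in> A"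
    using lookup_sum_singles[OF \<open>finite A\<close>, of x] by (auto simp: in_keys_iff split: if_splits)
qed

lemma upper_generic:
  assumes Em: "\<forall>(i,j)\<in>E. i \<noteq> j \<and> i \<in> {1..n} \<and> j \<in> {1..n}"
    and A: "A \<subseteq> {1..n}" "finite A" and ind: "\<forall>a\<in>A. \<forall>a'\<in>A. \<not> adj E a a'"
    and cov: "\<forall>(i,j)\<in>E. (\<exists>a\<in>A. adj E i a) \<or> (\<exists>a\<in>A. adj E j a)"
  shows "\<exists>f\<in>homog_comp n (card A). \<exists>P\<in>Ass n (MI n (Qe E)). colon n (MI n (Qe E)) f = (P :: 'a::field mpoly set)"
proof -
  define M where "M = (\<Sum>a\<in>A. Poly_Mapping.single a (1::nat))"
  define f :: "'a mpoly" where "f = Poly_Mapping.single M 1"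
  have kM: "Poly_Mapping.keys M = A" using keys_sum_singles[OF A(2)] M_def by simp
  have degM: "mon_deg M = card A"
  proof -
    have "mon_deg M = (\<Sum>i\<in>A. Poly_Mapping.lookup M i)" unfolding mon_deg_def kM ..
    also have "\<dots> = (\<Sum>i\<in>A. (1::nat))"
      by (rule sum.cong) (use lookup_sum_singles[OF A(2)] in \<open>auto simp: M_def\<close>)
    finally show ?thesis by simp
  qed
  have fp: "f \<in> polyring n" unfolding f_def using A kM by (intro polyring_single) auto
  have fh: "f \<in> homog_comp n (card A)" unfolding homog_comp_def using fp degM by (simp add: f_def)
  define C where "C = {c. \<exists>a\<in>A. adj E c a}"
  have key: "Qe E (M + u) \<longleftrightarrow> Qc C u" for u
  proof
    assume "Qc C u"
    then obtain c a where "c \<in> Poly_Mapping.keys u" "a \<in> A" "adj E c a" unfolding Qc_def C_def by auto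
    thus "Qe E (M + u)" unfolding Qe_def adj_def by (auto simp: keys_add_nat kM)
  next
    assume "Qe E (M + u)"
    then obtain i j where ij: "(i,j) \<in> E" "i \<in> A \<union> Poly_Mapping.keys u" "j \<in> A \<union> Poly_Mapping.keys u"
      unfolding Qe_def by (auto simp: keys_add_nat kM)
    show "Qc C u"
    proof (cases "i \<in> A")
      case True
      hence "j \<notin> A" using ind ij unfolding adj_def by blast
      hence "j \<in> Poly_Mapping.keys u" using ij by blast
      moreover have "j \<in> C" using True ij unfolding C_def adj_def by blast
      ultimately show ?thesis unfolding Qc_def by blast
    next
      case False
      hence iu: "i \<in> Poly_Mapping.keys u" using ij by blast
      show ?thesis
      proof (cases "j \<in> A")
        case True
        hence "i \<in> C" using ij unfolding C_def adj_def by blast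
        thus ?thesis using iu unfolding Qc_def by blast
      next
        case False
        hence ju: "j \<in> Poly_Mapping.keys u" using ij by blast
        have "i \<in> C \<or> j \<in> C" using cov ij unfolding C_def by blast
        thus ?thesis using iu ju unfolding Qc_def by blast
      qed
    qed
  qed
  have col: "colon n (MI n (Qe E)) f = (MI n (Qc C) :: 'a mpoly set)"
  proof (intro set_eqI iffI)
    fix g assume "g \<in> colon n (MI n (Qe E)) f"
    hence g: "g \<in> polyring n" "KQ (Qe E) (g * f)" unfolding colon_def MI_def by auto
    have "Qc C u" if "u \<in> Poly_Mapping.keys g" for u
    proof -
      have "M + u \<in> Poly_Mapping.keys (g * f)"
        using that by (simp add: f_def mult.commute[of g] keys_single_mult)
      thus ?thesis using g key unfolding KQ_def by blast
    qed
    thus "g \<in> MI n (Qc C)" using g unfolding MI_def KQ_def by blast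
  next
    fix g assume "g \<in> (MI n (Qc C) :: 'a mpoly set)"
    hence g: "g \<in> polyring n" "KQ (Qc C) g" unfolding MI_def by auto
    have "KQ (Qe E) (g * f)"
      unfolding KQ_def using g key by (auto simp: f_def mult.commute[of g] keys_single_mult KQ_def)
    thus "g \<in> colon n (MI n (Qe E)) f"
      unfolding colon_def MI_def using g fp polyring_mult by blast
  qed
  have "MI n (Qc C) \<in> (Ass n (MI n (Qe E)) :: 'a mpoly set set)"
    unfolding Ass_def using MI_prime col fp by blast
  thus ?thesis using fh col by blast
qed



lemma vnumber_eq:
  assumes Em: "\<forall>(i,j)\<in>E. i \<noteq> j \<and> i \<in> {1..n} \<and> j \<in> {1..n}"
    and A: "A \<subseteq> {1..n}" "finite A" "card A \<le> K" and ind: "\<forall>a\<in>A. \<forall>a'\<in>A. \<not> adj E a a'"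
    and cov: "\<forall>(i,j)\<in>E. (\<exists>a\<in>A. adj E i a) \<or> (\<exists>a\<in>A. adj E j a)"
    and low: "\<And>B. B \<subseteq> {1..n} \<Longrightarrow> finite B \<Longrightarrow> (\<forall>(i,j)\<in>E. \<exists>b\<in>B. adj E i b \<or> adj E j b) \<Longrightarrow> K \<le> card B"
  shows "vnumber n (edge_ideal n E :: 'a::field mpoly set) = K"
proof -
  have cA: "card A = K"
    using low[OF A(1,2)] cov A(3) by fastforce
  show ?thesis
    unfolding vnumber_def edge_ideal_MI[OF Em]
  proof (rule Least_equality)
    show "\<exists>f\<in>homog_comp n K. \<exists>P\<in>Ass n (MI n (Qe E)). colon n (MI n (Qe E)) f = (P :: 'a mpoly set)"
      using upper_generic[OF Em A(1,2) ind cov] cA by simp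
  next
    fix k assume "\<exists>f\<in>homog_comp n k. \<exists>P\<in>Ass n (MI n (Qe E)). colon n (MI n (Qe E)) f = (P :: 'a mpoly set)"
    then obtain f P where "f \<in> homog_comp n k" "P \<in> Ass n (MI n (Qe E))" "colon n (MI n (Qe E)) f = (P :: 'a mpoly set)"
      by blast
    from lower_generic[OF Em this] obtain u :: "nat \<Rightarrow>\<^sub>0 nat" where
      u: "Poly_Mapping.keys u \<subseteq> {1..n}" "card (Poly_Mapping.keys u) \<le> k"
         "\<forall>(i,j)\<in>E. \<exists>b\<in>Poly_Mapping.keys u. adj E i b \<or> adj E j b" by blast
    show "K \<le> k" using low[OF u(1) finite_keys u(3)] u(2) by simp
  qed
qed

lemma adj_path: "adj (path_edges m) x y \<longleftrightarrow> 1 \<le> x \<and> x \<le> m \<and> 1 \<le> y \<and> y \<le> m \<and> (y = x + 1 \<or> x = y + 1)"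
  unfolding adj_def path_edges_def by auto

lemma adj_cycle: "adj (cycle_edges n) x y \<longleftrightarrow> adj (path_edges n) x y \<or> (x = n \<and> y = 1) \<or> (x = 1 \<and> y = n)"
  unfolding adj_def cycle_edges_def by auto

lemma card_cover_bound:
  assumes "S \<subseteq> (\<Union>b\<in>B. set (G b :: nat list))" "finite B" "\<forall>b. length (G b) = 4"
  shows "card S \<le> 4 * card B"
proof -
  have "card S \<le> card (\<Union>b\<in>B. set (G b))"
    by (rule card_mono) (use assms in auto)
  also have "\<dots> \<le> (\<Sum>b\<in>B. card (set (G b)))" by (rule card_UN_le[OF assms(2)])
  also have "\<dots> \<le> (\<Sum>b\<in>B. 4)" by (rule sum_mono) (metis card_length assms(3))
  finally show ?thesis by simp
qed

lemma cov_path_aux: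
  fixes i m :: nat
  assumes "1 \<le> i" "i + 1 \<le> m"
  shows "min (4*((i-1) div 4)+3) m = i+1 \<or> i = min (4*((i-1) div 4)+3) m + 1 \<or> min (4*((i-1) div 4)+3) m = i+2 \<or> i = min (4*((i-1) div 4)+3) m"
  using assms by (cases "4*((i-1) div 4)+3 \<le> m"; simp add: min_def; presburger)
lemma cov_cyc_aux:
  fixes i n :: nat
  assumes "1 \<le> i" "i + 1 \<le> n"
  shows "min (4*(i div 4)+2) n = i+1 \<or> i = min (4*(i div 4)+2) n + 1 \<or> min (4*(i div 4)+2) n = i+2 \<or> i = min (4*(i div 4)+2) n"
  using assms by (cases "4*(i div 4)+2 \<le> n"; simp add: min_def; presburger)
lemma jK_path: "1 \<le> i \<Longrightarrow> i + 1 \<le> (m::nat) \<Longrightarrow> (i-1) div 4 < (m+2) div 4" by presburger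
lemma jK_cyc: "1 \<le> i \<Longrightarrow> i + 1 \<le> (n::nat) \<Longrightarrow> i div 4 < (n+3) div 4" by presburger
lemma K4_path: "4 * ((m + 2) div 4) \<le> (m::nat) + 2" by presburger
lemma K4_cyc: "4 * ((m + 3) div 4) \<le> (m::nat) + 3" by presburger
lemma ind_path_aux:
  fixes j j' K m :: nat
  assumes "4*K \<le> m+2" "j < K" "j' < K"
  shows "min (4*j+3) m \<noteq> min (4*j'+3) m + 1"
  using assms by (cases "4*j+3 \<le> m"; cases "4*j'+3 \<le> m"; simp add: min_def; presburger)
lemma ind_cyc_aux:
  fixes j j' K n :: nat
  assumes "4*K \<le> n+3" "j < K" "j' < K"
  shows "min (4*j+2) n \<noteq> min (4*j'+2) n + 1"
  using assms by (cases "4*j+2 \<le> n"; cases "4*j'+2 \<le> n"; simp add: min_def; presburger)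

lemma path_v:
  assumes m: "m \<ge> 2"
  shows "vnumber m (edge_ideal m (path_edges m) :: 'a::field mpoly set) = (m + 2) div 4"
proof -
  define K where "K = (m + 2) div 4"
  define A where "A = (\<lambda>j. min (4*j+3) m) ` {..<K}"
  have Em: "\<forall>(i,j)\<in>path_edges m. i \<noteq> j \<and> i \<in> {1..m} \<and> j \<in> {1..m}"
    unfolding path_edges_def by auto
  have A1: "A \<subseteq> {1..m}" unfolding A_def using m by auto
  have A2: "finite A" unfolding A_def by simp
  have A3: "card A \<le> K" unfolding A_def by (metis card_image_le card_lessThan finite_lessThan)
  have ind: "\<forall>a\<in>A. \<forall>a'\<in>A. \<not> adj (path_edges m) a a'"
  proof (intro ballI)
    fix a a' assume "a \<in> A" "a' \<in> A"
    then obtain j j' where jj: "j < K" "j' < K" "a = min (4*j+3) m" "a' = min (4*j'+3) m"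
      unfolding A_def by auto
    have K4: "4 * K \<le> m + 2" unfolding K_def by (rule K4_path)
    show "\<not> adj (path_edges m) a a'"
      unfolding adj_path using ind_path_aux[OF K4 jj(1,2)] ind_path_aux[OF K4 jj(2,1)] jj(3,4) by auto
  qed
  have cov': "(\<exists>a\<in>A. adj (path_edges m) i a) \<or> (\<exists>a\<in>A. adj (path_edges m) i' a)"
    if "(i, i') \<in> path_edges m" for i i'
  proof -
    have i: "1 \<le> i" "Suc i \<le> m" and i': "i' = Suc i" using that unfolding path_edges_def by auto
    define j where "j = (i - 1) div 4"
    have jK: "j < K" unfolding j_def K_def using i jK_path by simp
    have aA: "min (4*j+3) m \<in> A" unfolding A_def using jK by auto
    have "adj (path_edges m) i (min (4*j+3) m) \<or> adj (path_edges m) (Suc i) (min (4*j+3) m)"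
      unfolding adj_path j_def using i cov_path_aux[of i m] by auto
    thus "(\<exists>a\<in>A. adj (path_edges m) i a) \<or> (\<exists>a\<in>A. adj (path_edges m) i' a)"
      using aA i' by blast
  qed
  have cov: "\<forall>(i,j)\<in>path_edges m. (\<exists>a\<in>A. adj (path_edges m) i a) \<or> (\<exists>a\<in>A. adj (path_edges m) j a)"
    using cov' by blast
  have low: "K \<le> card B" if B: "B \<subseteq> {1..m}" "finite B" "\<forall>(i,j)\<in>path_edges m. \<exists>b\<in>B. adj (path_edges m) i b \<or> adj (path_edges m) j b" for B
  proof -
    define G where "G = (\<lambda>b::nat. [b - 2, b - 1, b, b + 1])"
    have "{1..m-1} \<subseteq> (\<Union>b\<in>B. set (G b))"
    proof
      fix i assume i: "i \<in> {1..m-1}"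
      hence "(i, i+1) \<in> path_edges m" unfolding path_edges_def by auto
      then obtain b where "b \<in> B" "adj (path_edges m) i b \<or> adj (path_edges m) (i+1) b" using B(3) by blast
      moreover have "i \<in> set (G b)" if "adj (path_edges m) i b \<or> adj (path_edges m) (i+1) b"
        using that unfolding adj_path G_def by auto
      ultimately show "i \<in> (\<Union>b\<in>B. set (G b))" by blast
    qed
    from card_cover_bound[OF this B(2)] have "m - 1 \<le> 4 * card B" by (simp add: G_def)
    thus "K \<le> card B" unfolding K_def by linarith
  qed
  have "vnumber m (edge_ideal m (path_edges m) :: 'a::field mpoly set) = K"
    by (rule vnumber_eq[OF Em A1 A2 A3 ind cov low])
  thus ?thesis unfolding K_def .
qed



lemma cyc_G:
  fixes i b n :: nat
  assumes n: "n \<ge> 5" and b: "1 \<le> b" "b \<le> n" and i: "1 \<le> i" "i \<le> n"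
    and h: "if i = n then adj (cycle_edges n) n b \<or> adj (cycle_edges n) 1 b
            else adj (cycle_edges n) i b \<or> adj (cycle_edges n) (i+1) b"
  shows "i \<in> set [if b = 1 then n - 1 else if b = 2 then n else b - 2, if b = 1 then n else b - 1, b,
                   if b = n then 1 else b + 1]"
  using assms unfolding adj_cycle adj_path by (auto split: if_splits)

lemma cycle_v:
  assumes n: "n \<ge> 5"
  shows "vnumber n (edge_ideal n (cycle_edges n) :: 'a::field mpoly set) = (n + 3) div 4"
proof -
  define K where "K = (n + 3) div 4"
  define A where "A = (\<lambda>j. min (4*j+2) n) ` {..<K}"
  have Em: "\<forall>(i,j)\<in>cycle_edges n. i \<noteq> j \<and> i \<in> {1..n} \<and> j \<in> {1..n}"
    unfolding cycle_edges_def path_edges_def using n by auto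
  have A1: "A \<subseteq> {1..n}" unfolding A_def using n by auto
  have A2: "finite A" unfolding A_def by simp
  have A3: "card A \<le> K" unfolding A_def by (metis card_image_le card_lessThan finite_lessThan)
  have ind: "\<forall>a\<in>A. \<forall>a'\<in>A. \<not> adj (cycle_edges n) a a'"
  proof (intro ballI)
    fix a a' assume "a \<in> A" "a' \<in> A"
    then obtain j j' where jj: "j < K" "j' < K" "a = min (4*j+2) n" "a' = min (4*j'+2) n"
      unfolding A_def by auto
    have K4: "4 * K \<le> n + 3" unfolding K_def by (rule K4_cyc)
    have "a \<ge> 2" "a' \<ge> 2" using jj(3,4) n by auto
    thus "\<not> adj (cycle_edges n) a a'"
      unfolding adj_cycle adj_path using ind_cyc_aux[OF K4 jj(1,2)] ind_cyc_aux[OF K4 jj(2,1)] jj(3,4) by auto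
  qed
  have K0: "0 < K" unfolding K_def using n by simp
  have cov': "(\<exists>a\<in>A. adj (cycle_edges n) i a) \<or> (\<exists>a\<in>A. adj (cycle_edges n) i' a)"
    if e: "(i, i') \<in> cycle_edges n" for i i'
  proof (cases "(i, i') = (n, 1)")
    case True
    have "min (4*0+2) n \<in> A" unfolding A_def using K0 by blast
    moreover have "adj (cycle_edges n) 1 (min (4*0+2) n)" unfolding adj_cycle adj_path using n by auto
    ultimately show ?thesis using True by auto
  next
    case False
    have i: "1 \<le> i" "Suc i \<le> n" and i': "i' = Suc i" using e False unfolding cycle_edges_def path_edges_def by auto
    define j where "j = i div 4"
    have jK: "j < K" unfolding j_def K_def using i jK_cyc by simp
    have aA: "min (4*j+2) n \<in> A" unfolding A_def using jK by auto
    have "adj (path_edges n) i (min (4*j+2) n) \<or> adj (path_edges n) (Suc i) (min (4*j+2) n)"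
      unfolding adj_path j_def using i cov_cyc_aux[of i n] by auto
    thus ?thesis using aA i' unfolding adj_cycle by blast
  qed
  have cov: "\<forall>(i,j)\<in>cycle_edges n. (\<exists>a\<in>A. adj (cycle_edges n) i a) \<or> (\<exists>a\<in>A. adj (cycle_edges n) j a)"
    using cov' by blast
  have low: "K \<le> card B" if B: "B \<subseteq> {1..n}" "finite B" "\<forall>(i,j)\<in>cycle_edges n. \<exists>b\<in>B. adj (cycle_edges n) i b \<or> adj (cycle_edges n) j b" for B
  proof -
    define G where "G = (\<lambda>b::nat. [if b = 1 then n - 1 else if b = 2 then n else b - 2, if b = 1 then n else b - 1, b,
                   if b = n then 1 else b + 1])"
    have "{1..n} \<subseteq> (\<Union>b\<in>B. set (G b))"
    proof
      fix i assume i: "i \<in> {1..n}"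
      obtain b where b: "b \<in> B" "if i = n then adj (cycle_edges n) n b \<or> adj (cycle_edges n) 1 b
            else adj (cycle_edges n) i b \<or> adj (cycle_edges n) (i+1) b"
      proof (cases "i = n")
        case True
        have "(n, 1) \<in> cycle_edges n" unfolding cycle_edges_def by auto
        then obtain b where "b \<in> B" "adj (cycle_edges n) n b \<or> adj (cycle_edges n) 1 b" using B(3) by blast
        thus ?thesis using that True by auto
      next
        case False
        hence "(i, i+1) \<in> cycle_edges n" using i unfolding cycle_edges_def path_edges_def by auto
        then obtain b where "b \<in> B" "adj (cycle_edges n) i b \<or> adj (cycle_edges n) (i+1) b" using B(3) by blast
        thus ?thesis using that False by auto
      qed
      have "i \<in> set (G b)" unfolding G_def
        by (rule cyc_G[OF n _ _ _ _ b(2)]) (use b(1) B(1) i in auto)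
      thus "i \<in> (\<Union>b\<in>B. set (G b))" using b(1) by blast
    qed
    from card_cover_bound[OF this B(2)] have "n \<le> 4 * card B" by (simp add: G_def)
    thus "K \<le> card B" unfolding K_def by linarith
  qed
  have "vnumber n (edge_ideal n (cycle_edges n) :: 'a::field mpoly set) = K"
    by (rule vnumber_eq[OF Em A1 A2 A3 ind cov low])
  thus ?thesis unfolding K_def .
qed

theorem proposition3p4:
  fixes n :: nat
  assumes "n \<ge> 5"
  shows "vnumber n (edge_ideal n (cycle_edges n) :: 'a::field mpoly set)
       = vnumber (n - 3) (edge_ideal (n - 3) (path_edges (n - 3)) :: 'a mpoly set) + 1"
proof -
  have "vnumber n (edge_ideal n (cycle_edges n) :: 'a::field mpoly set) = (n + 3) div 4"
    by (rule cycle_v[OF assms])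
  moreover have "vnumber (n - 3) (edge_ideal (n - 3) (path_edges (n - 3)) :: 'a mpoly set) = (n - 3 + 2) div 4"
    by (rule path_v) (use assms in simp)
  moreover have "(n + 3) div 4 = (n - 3 + 2) div 4 + 1" using assms by presburger
  ultimately show ?thesis by simp
qed


end
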